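(* Let $T>0$, $m\in\,]0,1[$ and let $\mathcal{U}(t,x)=t^{-\alpha}\left(D+\tilde k|x|^2t^{-2\alpha}\right)^{-\frac{1}{1-m}}$ for $t>0$, $x\in\mathbb{R}$, with $\alpha=\frac{1}{m+1}$, $\tilde k=\frac{1-m}{2(m+1)m}$, $D=\left(\frac{I}{\sqrt{\tilde k}}\right)^{\frac{2(1-m)}{m+1}}$, $I=\int_{-\pi/2}^{\pi/2}[\cos(x)]^{\frac{2m}{1-m}}dx$. Then: (i) if $\frac13<m<1$, there exist $p\ge2$ and a constant $\mathcal{C}_p$ (depending on $T$) such that for all $0\le s<\ell\le T$, \[\int_{]s,\ell]\times\mathbb{R}}\left(\mathcal{U}(t,x)\right)^{\frac{p(m-1)}{2}+1}dt\,dx\le\mathcal{C}_p(\ell-s);\] (ii) if $\frac13<m<1$, $\int_{]0,T]\times\mathbb{R}}(\mathcal{U}(t,x))^m\,dt\,dx<+\infty$; (iii) if $\frac15<m<1$, $\int_{]0,T]\times\mathbb{R}}(\mathcal{U}(t,x))^{2m}\,dt\,dx<+\infty$; (iv) if $\frac35<m<1$, then for every $\kappa>0$, $\int_{\mathbb{R}}|x|^4\,\mathcal{U}(\kappa,x)\,dx<+\infty$. *)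

theory Defs
  imports "HOL-Analysis.Analysis"
begin

definition alpha_exp :: "real \<Rightarrow> real" where
  "alpha_exp m = 1 / (m + 1)"

definition ktilde :: "real \<Rightarrow> real" where
  "ktilde m = (1 - m) / (2 * (m + 1) * m)"

definition Icos :: "real \<Rightarrow> real" where
  "Icos m = integral {-(pi/2)..pi/2} (\<lambda>x. cos x powr (2 * m / (1 - m)))"

definition Dconst :: "real \<Rightarrow> real" where
  "Dconst m = (Icos m / sqrt (ktilde m)) powr (2 * (1 - m) / (m + 1))"

definition Ucal :: "real \<Rightarrow> real \<Rightarrow> real \<Rightarrow> real" where
  "Ucal m t x = t powr (- alpha_exp m) *
     (Dconst m + ktilde m * \<bar>x\<bar>^2 * t powr (- 2 * alpha_exp m)) powr (- 1 / (1 - m))"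

end

theory Submission
  imports Defs
begin

lemma Icos_pos:
  assumes "0 < m" "m < 1"
  shows "Icos m > 0"
proof -
  define q where "q = 2 * m / (1 - m)"
  have q: "q > 0" using assms by (simp add: q_def)
  let ?f = "\<lambda>x. cos x powr q"
  have cont: "continuous_on {-(pi/2)..pi/2} ?f"
    using q by (intro continuous_on_powr' continuous_intros) (auto intro!: cos_ge_zero)
  have int1: "?f integrable_on {-(pi/2)..pi/2}"
    using cont integrable_continuous_interval by blast
  have int2: "?f integrable_on {-(pi/3)..pi/3}"
    by (rule integrable_on_subinterval[OF int1]) auto
  have "integral {-(pi/3)..pi/3} ?f \<le> integral {-(pi/2)..pi/2} ?f"
    by (rule integral_subset_le[OF _ int2 int1]) (auto intro!: cos_ge_zero)
  moreover have "integral {-(pi/3)..pi/3} (\<lambda>x. (1/2::real) powr q) \<le> integral {-(pi/3)..pi/3} ?f"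
  proof (rule integral_le[OF _ int2])
    show "(\<lambda>x. (1/2::real) powr q) integrable_on {-(pi/3)..pi/3}" by (intro integrable_continuous_interval continuous_intros)
    fix x assume x: "x \<in> {-(pi/3)..pi/3}"
    have "cos (pi/3) \<le> cos \<bar>x\<bar>"
      using x pi_gt3 by (intro cos_monotone_0_pi_le) auto
    then have "1/2 \<le> cos x" by (simp add: cos_60)
    then show "(1/2::real) powr q \<le> cos x powr q"
      using q by (intro powr_mono2) auto
  qed
  moreover have "integral {-(pi/3)..pi/3} (\<lambda>x. (1/2::real) powr q) > 0"
    using pi_gt_zero by (simp add: content_real)
  ultimately show ?thesis unfolding Icos_def q_def by linarith
qed

lemma meas_test: "(\<lambda>x. ennreal (Ucal m t x powr r)) \<in> borel_measurable borel"
  unfolding Ucal_def by measurable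

lemma meas_test2: "(\<lambda>z. ennreal (Ucal m (fst z) (snd z) powr r) * indicator ({s<..l} \<times> UNIV) z) \<in> borel_measurable (lborel \<Otimes>\<^sub>M lborel)"
  unfolding Ucal_def by measurable

lemma tail_half:
  assumes p: "p > 1"
  shows "(\<integral>\<^sup>+x. ennreal (x powr (-p) * indicator {1..} x) \<partial>lborel) = ennreal (1 / (p - 1))"
proof -
  have "((\<lambda>x. x powr (-p)) has_integral (-(1 powr (-p+1)) / (-p+1))) {1..}"
    using p by (intro has_integral_powr_to_inf) auto
  moreover have "-(1 powr (-p+1)) / (-p+1) = 1 / (p - 1)"
    using p by (simp add: field_simps)
  ultimately have "((\<lambda>x. x powr (-p)) has_integral (1 / (p - 1))) {1..}"
    by simp
  then have "((\<lambda>x. x powr (-p) * indicator {1..} x) has_integral (1 / (p - 1))) UNIV"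
  proof -
    have "(\<lambda>x. x powr (-p) * indicator {1..} x) = (\<lambda>x. if x \<in> {1..} then x powr (-p) else 0)"
      by (auto simp: indicator_def fun_eq_iff)
    then show ?thesis using \<open>((\<lambda>x. x powr (-p)) has_integral (1 / (p - 1))) {1..}\<close>
      by (simp only: has_integral_restrict_UNIV)
  qed
  then show ?thesis
    by (intro nn_integral_has_integral_lborel) (auto simp: indicator_def)
qed

lemma tail_fin:
  assumes p: "p > 1"
  shows "(\<integral>\<^sup>+x. ennreal (\<bar>x\<bar> powr (-p)) * indicator {x. 1 \<le> \<bar>x\<bar>} x \<partial>lborel) < \<infinity>"
proof -
  define h where "h x = ennreal (x powr (-p) * indicator {1..} x)" for x :: real
  have hm: "h \<in> borel_measurable borel" unfolding h_def by measurable
  have eq: "ennreal (\<bar>x\<bar> powr (-p)) * indicator {x. 1 \<le> \<bar>x\<bar>} x = h x + h (0 + (-1) * x)" for x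
    unfolding h_def by (auto simp: indicator_def)
  have "(\<integral>\<^sup>+x. h (0 + (-1) * x) \<partial>lborel) = (\<integral>\<^sup>+x. h x \<partial>lborel)"
    using nn_integral_real_affine[OF hm, of "-1" 0] by simp
  then have "(\<integral>\<^sup>+x. ennreal (\<bar>x\<bar> powr (-p)) * indicator {x. 1 \<le> \<bar>x\<bar>} x \<partial>lborel)
      = (\<integral>\<^sup>+x. h x \<partial>lborel) + (\<integral>\<^sup>+x. h x \<partial>lborel)"
    by (simp only: eq, subst nn_integral_add) (use hm in auto)
  also have "\<dots> < \<infinity>" using tail_half[OF p] unfolding h_def by (simp flip: ennreal_plus)
  finally show ?thesis .
qed

lemma fin_crit:
  fixes f :: "real \<Rightarrow> real"
  assumes fm: "f \<in> borel_measurable borel" and p: "p > 1"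
    and A: "\<And>x. \<bar>x\<bar> \<le> 1 \<Longrightarrow> f x \<le> A"
    and B: "\<And>x. 1 \<le> \<bar>x\<bar> \<Longrightarrow> f x \<le> B * \<bar>x\<bar> powr (-p)"
  shows "(\<integral>\<^sup>+x. ennreal (f x) \<partial>lborel) < \<infinity>"
proof -
  have le: "ennreal (f x) \<le> ennreal A * indicator {-1..1} x
      + ennreal B * (ennreal (\<bar>x\<bar> powr (-p)) * indicator {x. 1 \<le> \<bar>x\<bar>} x)" for x
  proof (cases "\<bar>x\<bar> \<le> 1")
    case True
    then have "ennreal (f x) \<le> ennreal A * indicator {-1..1} x"
      using A[OF True] by (auto simp: indicator_def intro: ennreal_leI)
    then show ?thesis by (rule order_trans) simp
  next
    case False
    have m: "ennreal (B * \<bar>x\<bar> powr (-p)) \<le> ennreal B * ennreal (\<bar>x\<bar> powr (-p))"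
    proof (cases "B \<ge> 0")
      case True then show ?thesis by (simp add: ennreal_mult)
    next
      case False
      then have "B * \<bar>x\<bar> powr (-p) \<le> 0" by (simp add: mult_nonpos_nonneg)
      then show ?thesis by (simp add: ennreal_neg)
    qed
    have "ennreal (f x) \<le> ennreal (B * \<bar>x\<bar> powr (-p))"
      using B[of x] False by (intro ennreal_leI) auto
    then have "ennreal (f x) \<le> ennreal B * (ennreal (\<bar>x\<bar> powr (-p)) * indicator {x. 1 \<le> \<bar>x\<bar>} x)"
      using m False by (auto simp: indicator_def)
    then show ?thesis by (rule order_trans) simp
  qed
  define G where "G x = ennreal (\<bar>x\<bar> powr (-p)) * indicator {x. 1 \<le> \<bar>x\<bar>} x" for x :: real
  have Gm: "G \<in> borel_measurable borel" unfolding G_def by measurable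
  have 1: "(\<integral>\<^sup>+x. ennreal (f x) \<partial>lborel) \<le> (\<integral>\<^sup>+x. ennreal A * indicator {-1..(1::real)} x
      + ennreal B * G x \<partial>lborel)"
    unfolding G_def by (intro nn_integral_mono le)
  have 2: "(\<integral>\<^sup>+x. ennreal A * indicator {-1..(1::real)} x + ennreal B * G x \<partial>lborel)
      = (\<integral>\<^sup>+x. ennreal A * indicator {-1..(1::real)} x \<partial>lborel) + ennreal B * (\<integral>\<^sup>+x. G x \<partial>lborel)"
    using Gm by (simp add: nn_integral_add nn_integral_cmult)
  have 3: "(\<integral>\<^sup>+x. ennreal A * indicator {-1..(1::real)} x \<partial>lborel) < \<infinity>"
    by (subst nn_integral_cmult_indicator) (auto simp: ennreal_mult_less_top)
  have 4: "ennreal B * (\<integral>\<^sup>+x. G x \<partial>lborel) < \<infinity>"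
    using tail_fin[OF p] unfolding G_def by (simp add: ennreal_mult_less_top)
  show ?thesis using 1 2 3 4 by (simp add: order_le_less_trans)
qed

lemma J_fin:
  assumes D: "D > 0" and k: "k > 0" and q: "q > 1/2"
  shows "(\<integral>\<^sup>+y. ennreal ((D + k * y\<^sup>2) powr (-q)) \<partial>lborel) < \<infinity>"
proof (rule fin_crit[where A = "D powr (-q)" and B = "k powr (-q)" and p = "2*q"])
  show "(\<lambda>y. (D + k * y\<^sup>2) powr (-q)) \<in> borel_measurable borel" by measurable
  show "1 < 2*q" using q by simp
  fix x :: real
  show "(D + k * x\<^sup>2) powr (-q) \<le> D powr (-q)"
    using D k q by (intro powr_mono2') auto
  assume "1 \<le> \<bar>x\<bar>"
  then have "(D + k * x\<^sup>2) powr (-q) \<le> (k * x\<^sup>2) powr (-q)"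
    using D k q by (intro powr_mono2') auto
  also have "\<dots> = k powr (-q) * \<bar>x\<bar> powr (-(2*q))"
  proof -
    have "x\<^sup>2 = \<bar>x\<bar> powr 2" using \<open>1 \<le> \<bar>x\<bar>\<close> by (simp add: powr_realpow)
    then have "x\<^sup>2 powr (-q) = \<bar>x\<bar> powr (-(2*q))" by (simp only: powr_powr) simp
    then show ?thesis using k by (simp add: powr_mult)
  qed
  finally show "(D + k * x\<^sup>2) powr (-q) \<le> k powr (-q) * \<bar>x\<bar> powr (-(2*q))" .
qed

lemma Ucal_powr:
  assumes t: "t > 0"
  shows "Ucal m t x powr r = t powr (- alpha_exp m * r) *
     (Dconst m + ktilde m * x\<^sup>2 * t powr (- 2 * alpha_exp m)) powr (-(r / (1 - m)))"
proof -
  have "Ucal m t x powr r = (t powr (- alpha_exp m)) powr r *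
     ((Dconst m + ktilde m * \<bar>x\<bar>^2 * t powr (- 2 * alpha_exp m)) powr (- 1 / (1 - m))) powr r"
    unfolding Ucal_def by (rule powr_mult)
  also have "\<dots> = t powr (- alpha_exp m * r) *
     (Dconst m + ktilde m * x\<^sup>2 * t powr (- 2 * alpha_exp m)) powr (-(r / (1 - m)))"
    by (simp add: powr_powr)
  finally show ?thesis .
qed

lemma scaling:
  assumes t: "t > 0"
  shows "(\<integral>\<^sup>+x. ennreal (Ucal m t x powr r) \<partial>lborel) = ennreal (t powr (alpha_exp m * (1 - r))) *
    (\<integral>\<^sup>+y. ennreal ((Dconst m + ktilde m * y\<^sup>2) powr (-(r / (1 - m)))) \<partial>lborel)"
proof -
  define a where "a = alpha_exp m"
  define c where "c = t powr a"
  have c: "c > 0" using t by (simp add: c_def)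
  define G where "G y = (Dconst m + ktilde m * y\<^sup>2) powr (-(r / (1 - m)))" for y :: real
  have fm: "(\<lambda>x. ennreal (Ucal m t x powr r)) \<in> borel_measurable borel"
    unfolding Ucal_def by measurable
  have pt: "ennreal (Ucal m t (0 + c * y) powr r) = ennreal (t powr (- a * r)) * ennreal (G y)" for y
  proof -
    have "(c * y)\<^sup>2 * t powr (- 2 * a) = y\<^sup>2 * (c\<^sup>2 * t powr (- 2 * a))"
      by (simp add: power_mult_distrib)
    also have "c\<^sup>2 * t powr (- 2 * a) = 1"
      using t unfolding c_def by (simp add: power2_eq_square flip: powr_add)
    finally have "(c * y)\<^sup>2 * t powr (- 2 * a) = y\<^sup>2" by simp
    then have "Ucal m t (0 + c * y) powr r = t powr (- a * r) * G y"
      unfolding Ucal_powr[OF t] G_def a_def by (simp add: mult.assoc)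
    then show ?thesis by (simp add: ennreal_mult G_def)
  qed
  have "(\<integral>\<^sup>+x. ennreal (Ucal m t x powr r) \<partial>lborel)
     = ennreal \<bar>c\<bar> * (\<integral>\<^sup>+y. ennreal (Ucal m t (0 + c * y) powr r) \<partial>lborel)"
    using nn_integral_real_affine[OF fm, of c 0] c by simp
  also have "\<dots> = ennreal c * (ennreal (t powr (- a * r)) * (\<integral>\<^sup>+y. ennreal (G y) \<partial>lborel))"
    using c by (simp only: pt, subst nn_integral_cmult) (auto simp: G_def)
  also have "\<dots> = ennreal (t powr (a * (1 - r))) * (\<integral>\<^sup>+y. ennreal (G y) \<partial>lborel)"
    using c t unfolding c_def
    by (simp add: mult.assoc[symmetric] ennreal_mult[symmetric] algebra_simps flip: powr_add)
  finally show ?thesis unfolding a_def G_def .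
qed

lemma prod_eq:
  assumes s: "0 \<le> s"
  shows "(\<integral>\<^sup>+ z. ennreal (Ucal m (fst z) (snd z) powr r) * indicator ({s<..l} \<times> UNIV) z \<partial>(lborel \<Otimes>\<^sub>M lborel))
    = (\<integral>\<^sup>+t. ennreal (t powr (alpha_exp m * (1 - r))) * indicator {s<..l} t \<partial>lborel) *
    (\<integral>\<^sup>+y. ennreal ((Dconst m + ktilde m * y\<^sup>2) powr (-(r / (1 - m)))) \<partial>lborel)"
    (is "?L = ?R")
proof -
  define J where "J = (\<integral>\<^sup>+y. ennreal ((Dconst m + ktilde m * y\<^sup>2) powr (-(r / (1 - m)))) \<partial>lborel)"
  have fm: "(\<lambda>z. ennreal (Ucal m (fst z) (snd z) powr r) * indicator ({s<..l} \<times> UNIV) z)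
      \<in> borel_measurable (lborel \<Otimes>\<^sub>M lborel)"
    unfolding Ucal_def by measurable
  have "?L = (\<integral>\<^sup>+t. \<integral>\<^sup>+x. ennreal (Ucal m t x powr r) * indicator ({s<..l} \<times> UNIV) (t, x) \<partial>lborel \<partial>lborel)"
    using lborel.nn_integral_fst[OF fm] by simp
  also have "\<dots> = (\<integral>\<^sup>+t. ennreal (t powr (alpha_exp m * (1 - r))) * indicator {s<..l} t * J \<partial>lborel)"
  proof (rule nn_integral_cong)
    fix t :: real
    show "(\<integral>\<^sup>+x. ennreal (Ucal m t x powr r) * indicator ({s<..l} \<times> UNIV) (t, x) \<partial>lborel)
        = ennreal (t powr (alpha_exp m * (1 - r))) * indicator {s<..l} t * J"
    proof (cases "t \<in> {s<..l}")
      case True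
      then have "t > 0" using s by auto
      then show ?thesis using True scaling[of t m r] by (simp add: indicator_def J_def)
    next
      case False
      then show ?thesis by (auto simp: indicator_def)
    qed
  qed
  also have "\<dots> = ?R" unfolding J_def
    by (rule nn_integral_multc) measurable
  finally show ?thesis .
qed

lemma consts_pos:
  assumes "0 < m" "m < 1"
  shows "Dconst m > 0" "ktilde m > 0" "alpha_exp m > 0"
proof -
  show k: "ktilde m > 0" using assms by (simp add: ktilde_def)
  show "Dconst m > 0" using Icos_pos[OF assms] k unfolding Dconst_def by simp
  show "alpha_exp m > 0" using assms by (simp add: alpha_exp_def)
qed

lemma J_fin':
  assumes "0 < m" "m < 1" "r / (1 - m) > 1/2"
  shows "(\<integral>\<^sup>+y. ennreal ((Dconst m + ktilde m * y\<^sup>2) powr (-(r / (1 - m)))) \<partial>lborel) < \<infinity>"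
  using J_fin[OF consts_pos(1,2)[OF assms(1,2)] assms(3)] .

lemma part_i:
  assumes m: "0 < m" "m < 1" "1/3 < m" and T: "T > 0"
  shows "\<exists>C::real. \<forall>s l. 0 \<le> s \<and> s < l \<and> l \<le> T \<longrightarrow>
        (\<integral>\<^sup>+ z. ennreal (Ucal m (fst z) (snd z) powr m)
              * indicator ({s<..l} \<times> UNIV) z \<partial>(lborel \<Otimes>\<^sub>M lborel))
        \<le> ennreal (C * (l - s))"
proof -
  define J where "J = (\<integral>\<^sup>+y. ennreal ((Dconst m + ktilde m * y\<^sup>2) powr (-(m / (1 - m)))) \<partial>lborel)"
  have "m / (1 - m) > 1/2" using m by (simp add: field_simps)
  then have Jf: "J < \<infinity>" unfolding J_def using J_fin'[OF m(1,2)] by blast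
  define j where "j = enn2real J"
  have Jj: "J = ennreal j" using Jf unfolding j_def by (simp add: less_top)
  have j0: "j \<ge> 0" unfolding j_def by simp
  define e where "e = alpha_exp m * (1 - m)"
  have e: "e \<ge> 0" using consts_pos(3)[OF m(1,2)] m unfolding e_def by simp
  show ?thesis
  proof (intro exI allI impI)
    fix s l :: real assume sl: "0 \<le> s \<and> s < l \<and> l \<le> T"
    have "(\<integral>\<^sup>+t. ennreal (t powr e) * indicator {s<..l} t \<partial>lborel)
        \<le> (\<integral>\<^sup>+t. ennreal (T powr e) * indicator {s<..l} t \<partial>lborel)"
    proof (rule nn_integral_mono)
      fix t :: real
      show "ennreal (t powr e) * indicator {s<..l} t \<le> ennreal (T powr e) * indicator {s<..l} t"
        using sl e by (auto simp: indicator_def intro!: ennreal_leI powr_mono2)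
    qed
    also have "\<dots> = ennreal (T powr e) * ennreal (l - s)"
      using sl by (subst nn_integral_cmult_indicator) auto
    finally have le: "(\<integral>\<^sup>+t. ennreal (t powr e) * indicator {s<..l} t \<partial>lborel) \<le> ennreal (T powr e) * ennreal (l - s)" .
    have "(\<integral>\<^sup>+ z. ennreal (Ucal m (fst z) (snd z) powr m)
              * indicator ({s<..l} \<times> UNIV) z \<partial>(lborel \<Otimes>\<^sub>M lborel))
        = (\<integral>\<^sup>+t. ennreal (t powr e) * indicator {s<..l} t \<partial>lborel) * J"
      using prod_eq[of s m m l] sl unfolding e_def J_def by simp
    also have "\<dots> \<le> ennreal (T powr e) * ennreal (l - s) * ennreal j"
      unfolding Jj by (intro mult_right_mono le) simp
    also have "\<dots> = ennreal (T powr e * j * (l - s))"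
      using sl j0 by (simp add: ennreal_mult mult_ac)
    finally show "(\<integral>\<^sup>+ z. ennreal (Ucal m (fst z) (snd z) powr m)
              * indicator ({s<..l} \<times> UNIV) z \<partial>(lborel \<Otimes>\<^sub>M lborel)) \<le> ennreal (T powr e * j * (l - s))" .
  qed
qed

lemma part_iii:
  assumes m: "0 < m" "m < 1" "1/5 < m" and T: "T > 0"
  shows "(\<integral>\<^sup>+ z. ennreal (Ucal m (fst z) (snd z) powr (2 * m))
              * indicator ({0<..T} \<times> UNIV) z \<partial>(lborel \<Otimes>\<^sub>M lborel)) < \<infinity>"
proof -
  define J where "J = (\<integral>\<^sup>+y. ennreal ((Dconst m + ktilde m * y\<^sup>2) powr (-(2 * m / (1 - m)))) \<partial>lborel)"
  have "2 * m / (1 - m) > 1/2" using m by (simp add: field_simps)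
  then have Jf: "J < \<infinity>" unfolding J_def using J_fin'[OF m(1,2)] by blast
  define e where "e = alpha_exp m * (1 - 2 * m)"
  have e: "e > -1" using m unfolding e_def alpha_exp_def by (simp add: field_simps)
  have hi: "((\<lambda>t. t powr e) has_integral (T powr (e+1) / (e+1))) {0..T}"
    using has_integral_powr_from_0[OF e] T by simp
  have "(\<lambda>t. t powr e * indicator {0..T} t) = (\<lambda>t. if t \<in> {0..T} then t powr e else 0)"
    by (auto simp: indicator_def fun_eq_iff)
  then have hU: "((\<lambda>t. t powr e * indicator {0..T} t) has_integral (T powr (e+1) / (e+1))) UNIV"
    using hi by (simp only: has_integral_restrict_UNIV)
  have "(\<integral>\<^sup>+t. ennreal (t powr e) * indicator {0<..T} t \<partial>lborel)
      \<le> (\<integral>\<^sup>+t. ennreal (t powr e * indicator {0..T} t) \<partial>lborel)"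
    by (intro nn_integral_mono) (auto simp: indicator_def)
  also have "\<dots> = ennreal (T powr (e+1) / (e+1))"
    by (rule nn_integral_has_integral_lborel[OF _ _ hU]) (auto simp: indicator_def intro!: borel_measurable_times borel_measurable_indicator)
  finally have "(\<integral>\<^sup>+t. ennreal (t powr e) * indicator {0<..T} t \<partial>lborel) < \<infinity>"
    using order_le_less_trans by fastforce
  moreover have "(\<integral>\<^sup>+ z. ennreal (Ucal m (fst z) (snd z) powr (2 * m))
              * indicator ({0<..T} \<times> UNIV) z \<partial>(lborel \<Otimes>\<^sub>M lborel))
        = (\<integral>\<^sup>+t. ennreal (t powr e) * indicator {0<..T} t \<partial>lborel) * J"
    using prod_eq[of 0 m "2*m" T] unfolding e_def J_def by simp
  ultimately show ?thesis using Jf by (simp add: ennreal_mult_less_top)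
qed

lemma part_iv:
  assumes m: "0 < m" "m < 1" "3/5 < m" and \<kappa>: "\<kappa> > 0"
  shows "(\<integral>\<^sup>+ x. ennreal (\<bar>x\<bar>^4 * Ucal m \<kappa> x) \<partial>lborel) < \<infinity>"
proof -
  define a where "a = alpha_exp m"
  define D where "D = Dconst m"
  define K where "K = ktilde m * \<kappa> powr (- 2 * a)"
  define \<beta> where "\<beta> = 1 / (1 - m)"
  have D: "D > 0" using consts_pos[OF m(1,2)] unfolding D_def by simp
  have K: "K > 0" using consts_pos[OF m(1,2)] \<kappa> unfolding K_def by simp
  have b: "2 * \<beta> - 4 > 1" using m unfolding \<beta>_def by (simp add: field_simps)
  have U: "Ucal m \<kappa> x = \<kappa> powr (-a) * (D + K * x\<^sup>2) powr (-\<beta>)" for x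
    unfolding Ucal_def a_def D_def K_def \<beta>_def by (simp add: mult_ac)
  show ?thesis
  proof (rule fin_crit[where A = "\<kappa> powr (-a) * D powr (-\<beta>)" and B = "\<kappa> powr (-a) * K powr (-\<beta>)"
        and p = "2 * \<beta> - 4"])
    show "(\<lambda>x. \<bar>x\<bar>^4 * Ucal m \<kappa> x) \<in> borel_measurable borel" unfolding Ucal_def by measurable
    show "1 < 2 * \<beta> - 4" by (rule b)
  next
    fix x :: real assume x: "\<bar>x\<bar> \<le> 1"
    have "\<bar>x\<bar>^4 \<le> 1" using x by (intro power_le_one) auto
    moreover have "(D + K * x\<^sup>2) powr (-\<beta>) \<le> D powr (-\<beta>)"
      using D K m unfolding \<beta>_def by (intro powr_mono2') auto
    ultimately have "\<bar>x\<bar>^4 * (\<kappa> powr (-a) * (D + K * x\<^sup>2) powr (-\<beta>)) \<le> 1 * (\<kappa> powr (-a) * D powr (-\<beta>))"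
      by (intro mult_mono mult_left_mono) auto
    then show "\<bar>x\<bar>^4 * Ucal m \<kappa> x \<le> \<kappa> powr (-a) * D powr (-\<beta>)" unfolding U by simp
  next
    fix x :: real assume x: "1 \<le> \<bar>x\<bar>"
    have "(D + K * x\<^sup>2) powr (-\<beta>) \<le> (K * x\<^sup>2) powr (-\<beta>)"
      using D K m x unfolding \<beta>_def by (intro powr_mono2') auto
    also have "\<dots> = K powr (-\<beta>) * \<bar>x\<bar> powr (-(2*\<beta>))"
    proof -
      have "x\<^sup>2 = \<bar>x\<bar> powr 2" using x by (simp add: powr_realpow)
      then have "x\<^sup>2 powr (-\<beta>) = \<bar>x\<bar> powr (-(2*\<beta>))" by (simp only: powr_powr) simp
      then show ?thesis using K by (simp add: powr_mult)
    qed
    finally have 1: "(D + K * x\<^sup>2) powr (-\<beta>) \<le> K powr (-\<beta>) * \<bar>x\<bar> powr (-(2*\<beta>))" .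
    have x4: "\<bar>x\<bar>^4 = \<bar>x\<bar> powr 4" using x by (simp add: powr_realpow)
    have "\<bar>x\<bar>^4 * Ucal m \<kappa> x \<le> \<bar>x\<bar> powr 4 * (\<kappa> powr (-a) * (K powr (-\<beta>) * \<bar>x\<bar> powr (-(2*\<beta>))))"
      unfolding U x4 using 1 by (intro mult_left_mono) auto
    also have "\<dots> = \<kappa> powr (-a) * K powr (-\<beta>) * (\<bar>x\<bar> powr 4 * \<bar>x\<bar> powr (-(2*\<beta>)))"
      by (simp add: mult_ac)
    also have "\<bar>x\<bar> powr 4 * \<bar>x\<bar> powr (-(2*\<beta>)) = \<bar>x\<bar> powr (-(2 * \<beta> - 4))"
      unfolding powr_add[symmetric] by (simp add: algebra_simps)
    finally show "\<bar>x\<bar>^4 * Ucal m \<kappa> x \<le> \<kappa> powr (-a) * K powr (-\<beta>) * \<bar>x\<bar> powr (-(2 * \<beta> - 4))" .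
  qed
qed

theorem lemma4p2:
  fixes T m :: real
  assumes "T > 0" and "0 < m" and "m < 1"
  shows
   "(1/3 < m \<longrightarrow> (\<exists>p::real. p \<ge> 2 \<and> (\<exists>C::real. \<forall>s l. 0 \<le> s \<and> s < l \<and> l \<le> T \<longrightarrow>
        (\<integral>\<^sup>+ z. ennreal (Ucal m (fst z) (snd z) powr (p * (m - 1) / 2 + 1))
              * indicator ({s<..l} \<times> UNIV) z \<partial>(lborel \<Otimes>\<^sub>M lborel))
        \<le> ennreal (C * (l - s)))))
  \<and> (1/3 < m \<longrightarrow>
        (\<integral>\<^sup>+ z. ennreal (Ucal m (fst z) (snd z) powr m)
              * indicator ({0<..T} \<times> UNIV) z \<partial>(lborel \<Otimes>\<^sub>M lborel)) < \<infinity>)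
  \<and> (1/5 < m \<longrightarrow>
        (\<integral>\<^sup>+ z. ennreal (Ucal m (fst z) (snd z) powr (2 * m))
              * indicator ({0<..T} \<times> UNIV) z \<partial>(lborel \<Otimes>\<^sub>M lborel)) < \<infinity>)
  \<and> (3/5 < m \<longrightarrow> (\<forall>\<kappa>>0.
        (\<integral>\<^sup>+ x. ennreal (\<bar>x\<bar>^4 * Ucal m \<kappa> x) \<partial>lborel) < \<infinity>))"
proof (intro conjI impI allI)
  assume m3: "1/3 < m"
  have e: "(2::real) * (m - 1) / 2 + 1 = m" by (simp add: field_simps)
  show "\<exists>p::real. p \<ge> 2 \<and> (\<exists>C::real. \<forall>s l. 0 \<le> s \<and> s < l \<and> l \<le> T \<longrightarrow>
        (\<integral>\<^sup>+ z. ennreal (Ucal m (fst z) (snd z) powr (p * (m - 1) / 2 + 1))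
              * indicator ({s<..l} \<times> UNIV) z \<partial>(lborel \<Otimes>\<^sub>M lborel))
        \<le> ennreal (C * (l - s)))"
    using part_i[OF assms(2,3) m3 assms(1)] by (intro exI[of _ 2]) (simp only: e, simp)
next
  assume m3: "1/3 < m"
  obtain C where C: "\<forall>s l. 0 \<le> s \<and> s < l \<and> l \<le> T \<longrightarrow>
        (\<integral>\<^sup>+ z. ennreal (Ucal m (fst z) (snd z) powr m)
              * indicator ({s<..l} \<times> UNIV) z \<partial>(lborel \<Otimes>\<^sub>M lborel))
        \<le> ennreal (C * (l - s))"
    using part_i[OF assms(2,3) m3 assms(1)] by blast
  from C[rule_format, of 0 T] assms(1) show "(\<integral>\<^sup>+ z. ennreal (Ucal m (fst z) (snd z) powr m)
              * indicator ({0<..T} \<times> UNIV) z \<partial>(lborel \<Otimes>\<^sub>M lborel)) < \<infinity>"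
    using order_le_less_trans by fastforce
next
  assume "1/5 < m"
  then show "(\<integral>\<^sup>+ z. ennreal (Ucal m (fst z) (snd z) powr (2 * m))
              * indicator ({0<..T} \<times> UNIV) z \<partial>(lborel \<Otimes>\<^sub>M lborel)) < \<infinity>"
    using part_iii assms by blast
next
  fix \<kappa> :: real
  assume "3/5 < m" "\<kappa> > 0"
  then show "(\<integral>\<^sup>+ x. ennreal (\<bar>x\<bar>^4 * Ucal m \<kappa> x) \<partial>lborel) < \<infinity>"
    using part_iv assms by blast
qed

end
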